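(* Let $G$ and $H$ be threshold graphs. Then $G$ is (isomorphic to) an induced subgraph of $H$ if and only if $\mathrm{seq}(G)$ is a subsequence (not necessarily of consecutive digits) of $\mathrm{seq}(H)$.
   Context: A threshold graph on $n\ge 1$ vertices is built from a single base vertex $v_0$ by successively adding vertices $v_1,\dots,v_{n-1}$, where each new vertex $v_i$ is added either as an isolated vertex (adjacent to none of $v_0,\dots,v_{i-1}$) or as a dominating vertex (adjacent to all of $v_0,\dots,v_{i-1}$). The creation sequence $\mathrm{seq}(G)=s_1s_2\cdots s_{n-1}$ is the binary string with $s_i=1$ if $v_i$ was added as a dominating vertex and $s_i=0$ if added as an isolated vertex. Every unlabeled threshold graph on $n$ vertices arises from exactly one binary string of length $n-1$ in this way. *)

theory Defs
  imports Main "HOL-Library.Sublist"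
begin

text \<open>Creation sequences are bool lists; True = 1 (dominating), False = 0 (isolated).
  The vertex v_i (i \<ge> 1) corresponds to entry s ! (i - 1).  Two distinct vertices
  v_i, v_j are adjacent iff the later one (index max i j) was added as dominating.\<close>

definition thr_adj :: "bool list \<Rightarrow> nat \<Rightarrow> nat \<Rightarrow> bool" where
  "thr_adj s i j \<longleftrightarrow> i \<noteq> j \<and> s ! (max i j - 1)"

definition creation_seq :: "'a set \<Rightarrow> ('a \<Rightarrow> 'a \<Rightarrow> bool) \<Rightarrow> bool list \<Rightarrow> bool" where
  "creation_seq V E s \<longleftrightarrow>
     (\<exists>f. bij_betw f {0..length s} V \<and>
          (\<forall>i\<in>{0..length s}. \<forall>j\<in>{0..length s}. E (f i) (f j) \<longleftrightarrow> thr_adj s i j))"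

definition induced_subgraph_iso ::
  "'a set \<Rightarrow> ('a \<Rightarrow> 'a \<Rightarrow> bool) \<Rightarrow> 'b set \<Rightarrow> ('b \<Rightarrow> 'b \<Rightarrow> bool) \<Rightarrow> bool" where
  "induced_subgraph_iso V E W F \<longleftrightarrow>
     (\<exists>f. inj_on f V \<and> f ` V \<subseteq> W \<and> (\<forall>u\<in>V. \<forall>v\<in>V. E u v \<longleftrightarrow> F (f u) (f v)))"

end

theory Submission
  imports Defs
begin

definition emb :: "bool list \<Rightarrow> bool list \<Rightarrow> (nat \<Rightarrow> nat) \<Rightarrow> bool" where
  "emb s t f \<longleftrightarrow> inj_on f {0..length s} \<and> f ` {0..length s} \<subseteq> {0..length t} \<and>
     (\<forall>i\<in>{0..length s}. \<forall>j\<in>{0..length s}. thr_adj s i j = thr_adj t (f i) (f j))"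

lemma thr_adj_sym: "thr_adj s i j = thr_adj s j i"
  unfolding thr_adj_def by (auto simp: max.commute)

lemma thr_adj_snoc: "i \<le> length s \<Longrightarrow> j \<le> length s \<Longrightarrow> thr_adj (s @ [b]) i j = thr_adj s i j"
  unfolding thr_adj_def by (auto simp: nth_append max_def)

lemma take_subseq: "n \<le> m \<Longrightarrow> subseq (take n t) (take m t)"
proof -
  assume "n \<le> m"
  then have "take n t = take n (take m t)" by (simp add: min_def)
  then show ?thesis by (metis prefix_imp_subseq take_is_prefix)
qed

lemma only_if_dir: "emb s t f \<Longrightarrow> subseq s (take (Max (f ` {0..length s})) t)"
proof (induction s arbitrary: f rule: rev_induct)
  case Nil
  then show ?case by simp
next
  case (snoc b s)
  define s' where "s' = s @ [b]"
  define k where "k = Suc (length s)"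
  define A where "A = {0..k}"
  have lens': "length s' = k" by (simp add: s'_def k_def)
  have inj: "inj_on f A" and img: "f ` A \<subseteq> {0..length t}"
    and adj: "\<And>i j. i \<in> A \<Longrightarrow> j \<in> A \<Longrightarrow> thr_adj s' i j = thr_adj t (f i) (f j)"
    using snoc.prems unfolding emb_def A_def s'_def k_def by auto
  define M where "M = Max (f ` A)"
  have finA: "finite (f ` A)" by (simp add: A_def)
  have "M \<in> f ` A" unfolding M_def using finA by (intro Max_in) (auto simp: A_def)
  then obtain j where jA: "j \<in> A" and fj: "f j = M" by auto
  have leM: "\<And>i. i \<in> A \<Longrightarrow> f i \<le> M" unfolding M_def using finA by auto
  have tM: "\<And>i. i \<in> A \<Longrightarrow> i \<noteq> j \<Longrightarrow> thr_adj s' i j = t ! (M - 1)"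
  proof -
    fix i assume iA: "i \<in> A" and ij: "i \<noteq> j"
    have "f i \<noteq> M" using inj iA jA ij fj by (metis inj_on_contraD)
    then show "thr_adj s' i j = t ! (M - 1)"
      using adj[OF iA jA] leM[OF iA] fj unfolding thr_adj_def by (simp add: max_def)
  qed
  have uk: "\<And>i. i \<in> A \<Longrightarrow> i \<noteq> k \<Longrightarrow> thr_adj s' i k = b"
    unfolding thr_adj_def s'_def k_def A_def by (auto simp: max_def nth_append)
  have kA: "k \<in> A" and zA: "0 \<in> A" by (auto simp: A_def)
  have tb: "t ! (M - 1) = b"
  proof (cases "j = k")
    case True
    then show ?thesis using tM[OF zA] uk[OF zA] by (simp add: k_def)
  next
    case False
    then show ?thesis using tM[OF kA] uk[OF jA] thr_adj_sym by metis
  qed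
  have uj: "\<And>i. i \<in> A \<Longrightarrow> i \<noteq> j \<Longrightarrow> thr_adj s' i j = b" using tM tb by simp
  have irr: "\<And>i. \<not> thr_adj s' i i" unfolding thr_adj_def by simp
  have uj': "\<And>i. i \<in> A \<Longrightarrow> i \<noteq> j \<Longrightarrow> thr_adj s' j i = b" using uj thr_adj_sym[of s' j] by simp
  have uk': "\<And>i. i \<in> A \<Longrightarrow> i \<noteq> k \<Longrightarrow> thr_adj s' k i = b" using uk thr_adj_sym[of s' k] by simp
  define \<sigma> where "\<sigma> = (\<lambda>i. if i = j then k else if i = k then j else i)"
  define g where "g = f \<circ> \<sigma>"
  have \<sigma>A: "\<And>i. i \<in> A \<Longrightarrow> \<sigma> i \<in> A" using jA kA by (auto simp: \<sigma>_def)
  have \<sigma>inj: "\<And>a c. \<sigma> a = \<sigma> c \<Longrightarrow> a = c" by (auto simp: \<sigma>_def split: if_splits)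
  have \<sigma>adj: "\<And>a c. a \<in> A \<Longrightarrow> c \<in> A \<Longrightarrow> thr_adj s' (\<sigma> a) (\<sigma> c) = thr_adj s' a c"
  proof -
    fix a c assume aA: "a \<in> A" and cA: "c \<in> A"
    show "thr_adj s' (\<sigma> a) (\<sigma> c) = thr_adj s' a c"
      using uj uj' uk uk' irr aA cA jA kA
      unfolding \<sigma>_def by (cases "j = k"; cases "a = j"; cases "a = k"; cases "c = j"; cases "c = k"; simp)
  qed
  have ginj: "inj_on g A"
    unfolding g_def inj_on_def using inj \<sigma>A \<sigma>inj by (metis comp_apply inj_onD)
  have gimg: "g ` A \<subseteq> f ` A" using \<sigma>A by (auto simp: g_def)
  have gadj: "\<And>a c. a \<in> A \<Longrightarrow> c \<in> A \<Longrightarrow> thr_adj s' a c = thr_adj t (g a) (g c)"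
    using adj \<sigma>A \<sigma>adj by (simp add: g_def)
  have gk: "g k = M" by (simp add: g_def \<sigma>_def fj)
  define B where "B = {0..length s}"
  have BA: "B \<subseteq> A" by (auto simp: A_def B_def k_def)
  have "emb s t g"
    unfolding emb_def
  proof (intro conjI ballI)
    show "inj_on g {0..length s}" using inj_on_subset[OF ginj BA] unfolding B_def .
    show "g ` {0..length s} \<subseteq> {0..length t}" using image_mono[OF BA, of g] gimg img unfolding B_def by (meson order_trans)
  next
    fix a c assume "a \<in> {0..length s}" "c \<in> {0..length s}"
    then show "thr_adj s a c = thr_adj t (g a) (g c)"
    proof -
      have "a \<in> A" "c \<in> A" using BA \<open>a \<in> {0..length s}\<close> \<open>c \<in> {0..length s}\<close> unfolding B_def by auto
      then show ?thesis using gadj[of a c] thr_adj_snoc[of a s c b] \<open>a \<in> {0..length s}\<close> \<open>c \<in> {0..length s}\<close>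
        unfolding s'_def by simp
    qed
  qed
  note embg = this
  have IH: "subseq s (take (Max (g ` B)) t)" using snoc.IH[OF embg] unfolding B_def .
  have "Max (g ` B) \<in> g ` B" by (intro Max_in) (auto simp: B_def)
  then obtain a where aB: "a \<in> B" and ga: "g a = Max (g ` B)" by auto
  have "a \<noteq> k" using aB by (auto simp: B_def k_def)
  then have "g a \<noteq> g k" using inj_onD[OF ginj _ subsetD[OF BA aB] kA] by blast
  then have "g a \<noteq> M" using gk by simp
  moreover have "g a \<le> M" using subsetD[OF gimg imageI[OF subsetD[OF BA aB]]] leM by auto
  ultimately have M'lt: "Max (g ` B) < M" using ga by simp
  have kpos: "0 \<noteq> k" by (simp add: k_def)
  have "g 0 \<noteq> M" using inj_onD[OF ginj _ zA kA] gk kpos by auto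
  moreover have g0: "g 0 \<le> M" using subsetD[OF gimg imageI[OF zA]] leM by auto
  ultimately have Mpos: "M \<ge> 1" by simp
  have Mlen: "M \<le> length t" using img \<open>M \<in> f ` A\<close> by auto
  have "take M t = take (M - 1) t @ [t ! (M - 1)]"
  proof -
    have "M - 1 < length t" using Mpos Mlen by simp
    then have "take (Suc (M - 1)) t = take (M - 1) t @ [t ! (M - 1)]" by (rule take_Suc_conv_app_nth)
    moreover have "Suc (M - 1) = M" using Mpos by simp
    ultimately show ?thesis by simp
  qed
  moreover have "subseq s (take (M - 1) t)"
  proof -
    have "subseq (take (Max (g ` B)) t) (take (M - 1) t)" using M'lt by (simp add: take_subseq)
    then show ?thesis using IH subseq_order.order_trans by blast
  qed
  ultimately have "subseq (s @ [b]) (take M t)" using tb by (simp add: list_emb_append_mono)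
  then show ?case unfolding M_def A_def k_def by simp
qed

lemma mono_lt: "\<forall>i<n. f i < f (Suc (i::nat)) \<Longrightarrow> i < i' \<Longrightarrow> i' \<le> n \<Longrightarrow> (f i :: nat) < f i'"
proof (induction i')
  case 0 then show ?case by simp
next
  case (Suc i')
  then show ?case by (cases "i = i'") (auto intro: less_trans)
qed

lemma if_dir: "subseq s t \<Longrightarrow> \<exists>f. f 0 = 0 \<and> (\<forall>i<length s. f i < f (Suc i)) \<and>
   f (length s) \<le> length t \<and> (\<forall>i\<in>{1..length s}. t ! (f i - 1) = s ! (i - 1))"
proof (induction rule: list_emb.induct)
  case (list_emb_Nil ys)
  then show ?case by (intro exI[of _ id]) simp
next
  case (list_emb_Cons xs ys y)
  then obtain f where f: "f 0 = 0" "\<forall>i<length xs. f i < f (Suc i)" "f (length xs) \<le> length ys"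
    "\<forall>i\<in>{1..length xs}. ys ! (f i - 1) = xs ! (i - 1)" by blast
  have pos: "\<And>i. i \<le> length xs \<Longrightarrow> 1 \<le> i \<Longrightarrow> 1 \<le> f i"
  proof -
    fix i assume h: "i \<le> length xs" "1 \<le> i"
    have "f 0 < f i" by (rule mono_lt[OF f(2)]) (use h in auto)
    then show "1 \<le> f i" using f(1) by simp
  qed
  show ?case
  proof (rule exI[of _ "\<lambda>i. if i = 0 then 0 else Suc (f i)"], intro conjI allI impI ballI)
    fix i assume i: "i \<in> {1..length xs}"
    then have "1 \<le> f i" using pos by auto
    then have "(y # ys) ! (Suc (f i) - 1) = ys ! (f i - 1)" by (cases "f i") auto
    then show "(y # ys) ! ((if i = 0 then 0 else Suc (f i)) - 1) = xs ! (i - 1)" using f(4) i by auto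
  qed (use f in auto)
next
  case (list_emb_Cons2 x y xs ys)
  then obtain f where f: "f 0 = 0" "\<forall>i<length xs. f i < f (Suc i)" "f (length xs) \<le> length ys"
    "\<forall>i\<in>{1..length xs}. ys ! (f i - 1) = xs ! (i - 1)" by blast
  have pos: "\<And>i. i \<le> length xs \<Longrightarrow> 1 \<le> i \<Longrightarrow> 1 \<le> f i"
  proof -
    fix i assume h: "i \<le> length xs" "1 \<le> i"
    have "f 0 < f i" by (rule mono_lt[OF f(2)]) (use h in auto)
    then show "1 \<le> f i" using f(1) by simp
  qed
  show ?case
  proof (rule exI[of _ "\<lambda>i. if i = 0 then 0 else Suc (f (i - 1))"], intro conjI allI impI ballI)
    fix i assume "i < length (x # xs)"
    then show "(if i = 0 then 0 else Suc (f (i - 1))) < (if Suc i = 0 then 0 else Suc (f (Suc i - 1)))"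
      using f by (cases i) auto
  next
    fix i assume i: "i \<in> {1..length (x # xs)}"
    show "(y # ys) ! ((if i = 0 then 0 else Suc (f (i - 1))) - 1) = (x # xs) ! (i - 1)"
    proof (cases "i = 1")
      case True then show ?thesis using f list_emb_Cons2.hyps by simp
    next
      case False
      then have "i - 1 \<in> {1..length xs}" "i \<ge> 2" using i by auto
      then have i1: "i - 1 \<in> {1..length xs}" and i2: "i \<ge> 2" by auto
      have "1 \<le> f (i - 1)" using pos i1 by auto
      then have e1: "(y # ys) ! (Suc (f (i - 1)) - 1) = ys ! (f (i - 1) - 1)" by (cases "f (i - 1)") auto
      have e2: "(x # xs) ! (i - 1) = xs ! (i - 1 - 1)" using i2 by (cases "i - 1") auto
      have e3: "ys ! (f (i - 1) - 1) = xs ! (i - 1 - 1)" using f(4) i1 by blast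
      show ?thesis using e1 e2 e3 i2 by simp
    qed
  qed (use f in auto)
qed

lemma if_emb: "subseq s t \<Longrightarrow> \<exists>f. emb s t f"
proof -
  assume "subseq s t"
  then obtain f where f: "f 0 = 0" "\<forall>i<length s. f i < f (Suc i)" "f (length s) \<le> length t"
    "\<forall>i\<in>{1..length s}. t ! (f i - 1) = s ! (i - 1)" using if_dir by blast
  have lt: "\<And>i i'. i < i' \<Longrightarrow> i' \<le> length s \<Longrightarrow> f i < f i'" using mono_lt f(2) by blast
  have le: "\<And>i. i \<le> length s \<Longrightarrow> f i \<le> length t"
    using lt f(3) by (metis le_less le_trans)
  have adj: "\<And>i j. i < j \<Longrightarrow> j \<le> length s \<Longrightarrow> thr_adj s i j = thr_adj t (f i) (f j)"
  proof -
    fix i j assume ij: "i < j" "j \<le> length s"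
    then have "f i < f j" using lt by blast
    moreover have "t ! (f j - 1) = s ! (j - 1)" using f(4) ij by auto
    ultimately show "thr_adj s i j = thr_adj t (f i) (f j)" using ij
      unfolding thr_adj_def by (simp add: max_def)
  qed
  have "emb s t f"
    unfolding emb_def
  proof (intro conjI ballI)
    show "inj_on f {0..length s}"
      unfolding inj_on_def using lt by (metis atLeastAtMost_iff less_irrefl linorder_neqE_nat)
    show "f ` {0..length s} \<subseteq> {0..length t}" using le by auto
  next
    fix i j assume "i \<in> {0..length s}" "j \<in> {0..length s}"
    then show "thr_adj s i j = thr_adj t (f i) (f j)"
      using adj[of i j] adj[of j i] thr_adj_sym[of s] thr_adj_sym[of t]
      by (cases i j rule: linorder_cases) (auto simp: thr_adj_def)
  qed
  then show ?thesis by blast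
qed

theorem mainTheorem1:
  fixes V :: "'a set" and E :: "'a \<Rightarrow> 'a \<Rightarrow> bool"
    and W :: "'b set" and F :: "'b \<Rightarrow> 'b \<Rightarrow> bool"
    and s t :: "bool list"
  assumes "creation_seq V E s" and "creation_seq W F t"
  shows "induced_subgraph_iso V E W F \<longleftrightarrow> subseq s t"
proof -
  obtain \<phi> where \<phi>: "bij_betw \<phi> {0..length s} V"
    "\<forall>i\<in>{0..length s}. \<forall>j\<in>{0..length s}. E (\<phi> i) (\<phi> j) \<longleftrightarrow> thr_adj s i j"
    using assms(1) unfolding creation_seq_def by blast
  obtain \<psi> where \<psi>: "bij_betw \<psi> {0..length t} W"
    "\<forall>i\<in>{0..length t}. \<forall>j\<in>{0..length t}. F (\<psi> i) (\<psi> j) \<longleftrightarrow> thr_adj t i j"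
    using assms(2) unfolding creation_seq_def by blast
  show ?thesis
  proof
    assume "induced_subgraph_iso V E W F"
    then obtain h where h: "inj_on h V" "h ` V \<subseteq> W" "\<forall>u\<in>V. \<forall>v\<in>V. E u v \<longleftrightarrow> F (h u) (h v)"
      unfolding induced_subgraph_iso_def by blast
    define g where "g = inv_into {0..length t} \<psi> \<circ> h \<circ> \<phi>"
    have Wimg: "\<psi> ` {0..length t} = W" using \<psi>(1) by (rule bij_betw_imp_surj_on)
    have \<phi>V: "\<phi> i \<in> V" if "i \<in> {0..length s}" for i using bij_betw_apply[OF \<phi>(1) that] .
    have hW: "h (\<phi> i) \<in> \<psi> ` {0..length t}" if "i \<in> {0..length s}" for i
      using \<phi>V[OF that] h(2) Wimg by blast
    have gT: "g i \<in> {0..length t}" if "i \<in> {0..length s}" for i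
      unfolding g_def comp_def by (rule inv_into_into[OF hW[OF that]])
    have \<psi>g: "\<psi> (g i) = h (\<phi> i)" if "i \<in> {0..length s}" for i
      unfolding g_def comp_def by (rule f_inv_into_f[OF hW[OF that]])
    have \<phi>inj: "inj_on \<phi> {0..length s}" using \<phi>(1) by (rule bij_betw_imp_inj_on)
    have "emb s t g"
      unfolding emb_def
    proof (intro conjI ballI)
      show "inj_on g {0..length s}"
      proof (rule inj_onI)
        fix i j assume i: "i \<in> {0..length s}" and j: "j \<in> {0..length s}" and e: "g i = g j"
        have "h (\<phi> i) = h (\<phi> j)" using \<psi>g[OF i] \<psi>g[OF j] e by simp
        then have "\<phi> i = \<phi> j" using inj_onD[OF h(1) _ \<phi>V[OF i] \<phi>V[OF j]] by blast
        then show "i = j" using inj_onD[OF \<phi>inj _ i j] by blast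
      qed
      show "g ` {0..length s} \<subseteq> {0..length t}" using gT by auto
    next
      fix i j assume i: "i \<in> {0..length s}" and j: "j \<in> {0..length s}"
      have "thr_adj s i j = E (\<phi> i) (\<phi> j)" using \<phi>(2) i j by blast
      also have "\<dots> = F (h (\<phi> i)) (h (\<phi> j))" using h(3) \<phi>V i j by blast
      also have "\<dots> = F (\<psi> (g i)) (\<psi> (g j))" using \<psi>g i j by simp
      also have "\<dots> = thr_adj t (g i) (g j)" using \<psi>(2) gT i j by blast
      finally show "thr_adj s i j = thr_adj t (g i) (g j)" .
    qed
    then have ss: "subseq s (take (Max (g ` {0..length s})) t)" by (rule only_if_dir)
    show "subseq s t" by (rule subseq_order.order_trans[OF ss prefix_imp_subseq[OF take_is_prefix]])
  next
    assume "subseq s t"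
    then obtain f where f: "emb s t f" using if_emb by blast
    note fe = f[unfolded emb_def]
    note finj = conjunct1[OF fe]
    note fimg = conjunct1[OF conjunct2[OF fe]]
    note fadj = conjunct2[OF conjunct2[OF fe]]
    define \<phi>' where "\<phi>' = inv_into {0..length s} \<phi>"
    have Vimg: "\<phi> ` {0..length s} = V" using \<phi>(1) by (rule bij_betw_imp_surj_on)
    have \<phi>'S: "\<phi>' u \<in> {0..length s}" if "u \<in> V" for u
      unfolding \<phi>'_def by (rule inv_into_into) (use that Vimg in simp)
    have \<phi>\<phi>': "\<phi> (\<phi>' u) = u" if "u \<in> V" for u
      unfolding \<phi>'_def by (rule f_inv_into_f) (use that Vimg in simp)
    have Wimg: "\<psi> ` {0..length t} = W" using \<psi>(1) by (rule bij_betw_imp_surj_on)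
    have \<psi>inj: "inj_on \<psi> {0..length t}" using \<psi>(1) by (rule bij_betw_imp_inj_on)
    have fT: "f i \<in> {0..length t}" if "i \<in> {0..length s}" for i using fimg that by blast
    define h where "h = \<psi> \<circ> f \<circ> \<phi>'"
    have A1: "inj_on h V"
      unfolding inj_on_def h_def
    proof (intro ballI impI)
      fix u v assume u: "u \<in> V" and v: "v \<in> V" and eq: "(\<psi> \<circ> f \<circ> \<phi>') u = (\<psi> \<circ> f \<circ> \<phi>') v"
      have "\<psi> (f (\<phi>' u)) = \<psi> (f (\<phi>' v))" using eq by simp
      then have "f (\<phi>' u) = f (\<phi>' v)"
        by (rule inj_onD[OF \<psi>inj _ fT[OF \<phi>'S[OF u]] fT[OF \<phi>'S[OF v]]])
      then have e: "\<phi>' u = \<phi>' v" by (rule inj_onD[OF finj _ \<phi>'S[OF u] \<phi>'S[OF v]])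
      have "u = \<phi> (\<phi>' u)" using \<phi>\<phi>'[OF u] by (rule sym)
      also have "\<dots> = \<phi> (\<phi>' v)" using e by (rule arg_cong)
      also have "\<dots> = v" by (rule \<phi>\<phi>'[OF v])
      finally show "u = v" .
    qed
    have A2: "h ` V \<subseteq> W"
    proof
      fix y assume "y \<in> h ` V"
      then obtain u where u: "u \<in> V" and y: "y = h u" by blast
      have "\<psi> (f (\<phi>' u)) \<in> \<psi> ` {0..length t}" using fT[OF \<phi>'S[OF u]] by (rule imageI)
      then show "y \<in> W" using y Wimg by (simp add: h_def)
    qed
    have A3: "\<forall>u\<in>V. \<forall>v\<in>V. E u v \<longleftrightarrow> F (h u) (h v)"
    proof (intro ballI)
      fix u v assume u: "u \<in> V" and v: "v \<in> V"
      have "E u v = E (\<phi> (\<phi>' u)) (\<phi> (\<phi>' v))" using \<phi>\<phi>'[OF u] \<phi>\<phi>'[OF v] by simp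
      also have "\<dots> = thr_adj s (\<phi>' u) (\<phi>' v)" using \<phi>(2)[rule_format, OF \<phi>'S[OF u] \<phi>'S[OF v]] by simp
      also have "\<dots> = thr_adj t (f (\<phi>' u)) (f (\<phi>' v))" using fadj[rule_format, OF \<phi>'S[OF u] \<phi>'S[OF v]] .
      also have "\<dots> = F (h u) (h v)" unfolding h_def comp_def using \<psi>(2)[rule_format, OF fT[OF \<phi>'S[OF u]] fT[OF \<phi>'S[OF v]]] by simp
      finally show "E u v \<longleftrightarrow> F (h u) (h v)" .
    qed
    show "induced_subgraph_iso V E W F" unfolding induced_subgraph_iso_def
      by (rule exI[of _ h]) (intro conjI A1 A2 A3)
  qed
qed

end
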